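(* Let $\theta\in(0,1)$ be irrational, $\tau=1$, $k\ge1$ even, and $b\ge1$ an integer with $\frac1{(b+1)(b+2)}\le q_k\|q_k\theta\|<\frac1{b(b+1)}$. Then $$\bigcup_{i=1}^{q_k}\Big(i\theta-\frac1{q_{k+1}},\;i\theta+(b-1)\|q_k\theta\|+\frac1{(b+1)q_k}\Big)\subset F_k.$$
   Context: $\mathbb T=\mathbb R/\mathbb Z$, points identified with fractional parts; $(x-a,x+b)$ denotes the projection to $\mathbb T$ of the real interval. $\|t\|$ is the distance to the nearest integer; $B(x,r)$ the open ball in $\mathbb T$. $q_k$ are the convergent denominators of $\theta=[0;a_1,a_2,\dots]$ ($q_0=1$, $q_{k+1}=a_{k+1}q_k+q_{k-1}$). With $\tau=1$: $G_n=\bigcup_{i=1}^nB(i\theta,n^{-1})$ and $F_k=\bigcap_{n=q_k+1}^{q_{k+1}}G_n$. *)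

theory Defs
  imports Complex_Main
begin

text \<open>Subsets of the circle T = R/Z are represented as Z-periodic subsets of R.\<close>

definition tnorm :: "real \<Rightarrow> real" where
  "tnorm t = \<bar>t - of_int (round t)\<bar>"

fun cf_rem :: "real \<Rightarrow> nat \<Rightarrow> real" where
  "cf_rem \<theta> 0 = \<theta>"
| "cf_rem \<theta> (Suc n) = frac (1 / cf_rem \<theta> n)"

definition cf_a :: "real \<Rightarrow> nat \<Rightarrow> nat" where
  "cf_a \<theta> n = nat \<lfloor>1 / cf_rem \<theta> (n - 1)\<rfloor>"

fun cf_q :: "real \<Rightarrow> nat \<Rightarrow> nat" where
  "cf_q \<theta> 0 = 1"
| "cf_q \<theta> (Suc 0) = cf_a \<theta> 1"
| "cf_q \<theta> (Suc (Suc k)) = cf_a \<theta> (Suc (Suc k)) * cf_q \<theta> (Suc k) + cf_q \<theta> k"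

definition tball :: "real \<Rightarrow> real \<Rightarrow> real set" where
  "tball x r = {y. tnorm (y - x) < r}"

definition tinterval :: "real \<Rightarrow> real \<Rightarrow> real set" where
  "tinterval l u = {y. \<exists>t. l < t \<and> t < u \<and> y - t \<in> \<int>}"

definition G_set :: "real \<Rightarrow> nat \<Rightarrow> real set" where
  "G_set \<theta> n = (\<Union>i\<in>{1..n}. tball (real i * \<theta>) (1 / real n))"

definition F_set :: "real \<Rightarrow> nat \<Rightarrow> real set" where
  "F_set \<theta> k = (\<Inter>n\<in>{cf_q \<theta> k + 1 .. cf_q \<theta> (k+1)}. G_set \<theta> n)"

end

theory Submission
  imports Defs
begin

lemma rem_props:
  assumes "0 < \<theta>" "\<theta> < 1" "\<theta> \<notin> \<rat>"
  shows "0 < cf_rem \<theta> n \<and> cf_rem \<theta> n < 1 \<and> cf_rem \<theta> n \<notin> \<rat>"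
proof (induction n)
  case 0 then show ?case using assms by simp
next
  case (Suc n)
  let ?x = "1 / cf_rem \<theta> n"
  have xi: "?x \<notin> \<rat>"
  proof
    assume "?x \<in> \<rat>"
    then have "1 / ?x \<in> \<rat>" by (rule Rats_divide[OF Rats_1])
    then show False using Suc by simp
  qed
  have fi: "frac ?x \<notin> \<rat>"
  proof
    assume "frac ?x \<in> \<rat>"
    then have "frac ?x + of_int \<lfloor>?x\<rfloor> \<in> \<rat>" by simp
    then show False using xi by (simp add: frac_def)
  qed
  have "frac ?x \<noteq> 0" using xi Ints_subset_Rats frac_eq_0_iff by blast
  then have "0 < frac ?x" using frac_ge_0[of ?x] by linarith
  then show ?case using fi frac_lt_1[of ?x] by simp
qed

lemma a_props:
  assumes "0 < \<theta>" "\<theta> < 1" "\<theta> \<notin> \<rat>"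
  shows "real (cf_a \<theta> (Suc n)) = 1 / cf_rem \<theta> n - cf_rem \<theta> (Suc n) \<and> cf_a \<theta> (Suc n) \<ge> 1"
proof -
  let ?x = "1 / cf_rem \<theta> n"
  have r: "0 < cf_rem \<theta> n" "cf_rem \<theta> n < 1" using rem_props[OF assms] by auto
  have "?x > 1" using r by simp
  then have f: "\<lfloor>?x\<rfloor> \<ge> 1" by (simp add: one_le_floor)
  have "real (cf_a \<theta> (Suc n)) = real (nat \<lfloor>?x\<rfloor>)" by (simp add: cf_a_def)
  also have "\<dots> = of_int \<lfloor>?x\<rfloor>" using f by (intro of_nat_nat) linarith
  finally have e: "real (cf_a \<theta> (Suc n)) = of_int \<lfloor>?x\<rfloor>" .
  moreover have "cf_rem \<theta> (Suc n) = ?x - of_int \<lfloor>?x\<rfloor>" by (simp add: frac_def)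
  ultimately have "real (cf_a \<theta> (Suc n)) = 1 / cf_rem \<theta> n - cf_rem \<theta> (Suc n)" using e by linarith
  moreover have "real (cf_a \<theta> (Suc n)) \<ge> 1" using e f by simp
  ultimately show ?thesis by simp
qed

declare cf_rem.simps(2)[simp del]

fun cf_p :: "real \<Rightarrow> nat \<Rightarrow> int" where
  "cf_p \<theta> 0 = 0"
| "cf_p \<theta> (Suc 0) = 1"
| "cf_p \<theta> (Suc (Suc k)) = int (cf_a \<theta> (Suc (Suc k))) * cf_p \<theta> (Suc k) + cf_p \<theta> k"

definition cf_D :: "real \<Rightarrow> nat \<Rightarrow> real" where
  "cf_D \<theta> k = real (cf_q \<theta> k) * \<theta> - of_int (cf_p \<theta> k)"

lemma D_rec: "cf_D \<theta> (Suc (Suc k)) = real (cf_a \<theta> (Suc (Suc k))) * cf_D \<theta> (Suc k) + cf_D \<theta> k"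
  by (simp add: cf_D_def algebra_simps)

lemma D_prod:
  assumes "0 < \<theta>" "\<theta> < 1" "\<theta> \<notin> \<rat>"
  shows "cf_D \<theta> k = (-1)^k * (\<Prod>j\<le>k. cf_rem \<theta> j) \<and>
         cf_D \<theta> (Suc k) = (-1)^(Suc k) * (\<Prod>j\<le>Suc k. cf_rem \<theta> j)"
proof (induction k)
  case 0
  have "real (cf_a \<theta> 1) = 1/\<theta> - cf_rem \<theta> 1" using a_props[OF assms, of 0] by simp
  then have "real (cf_a \<theta> 1) * \<theta> = 1 - cf_rem \<theta> 1 * \<theta>" using assms(1) by (simp add: field_simps)
  then show ?case by (simp add: cf_D_def)
next
  case (Suc k)
  let ?r = "cf_rem \<theta>" let ?P = "\<Prod>j\<le>k. ?r j"
  have a: "real (cf_a \<theta> (Suc (Suc k))) = 1 / ?r (Suc k) - ?r (Suc (Suc k))"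
    using a_props[OF assms, of "Suc k"] by simp
  have r1: "?r (Suc k) > 0" using rem_props[OF assms] by auto
  have "cf_D \<theta> (Suc (Suc k)) = (1 / ?r (Suc k) - ?r (Suc (Suc k))) * ((-1)^(Suc k) * (?P * ?r (Suc k))) + (-1)^k * ?P"
    using Suc D_rec[of \<theta> k] a by simp
  also have "\<dots> = (-1)^k * (?P * ?r (Suc k) * ?r (Suc (Suc k)))"
    using r1 by (simp add: field_simps)
  finally show ?case using Suc by simp
qed

lemma E_ident:
  "real (cf_q \<theta> (Suc k)) * cf_D \<theta> k - real (cf_q \<theta> k) * cf_D \<theta> (Suc k) = (-1)^k"
proof (induction k)
  case 0 then show ?case by (simp add: cf_D_def algebra_simps)
next
  case (Suc k)
  have "real (cf_q \<theta> (Suc (Suc k))) * cf_D \<theta> (Suc k) - real (cf_q \<theta> (Suc k)) * cf_D \<theta> (Suc (Suc k))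
      = - (real (cf_q \<theta> (Suc k)) * cf_D \<theta> k - real (cf_q \<theta> k) * cf_D \<theta> (Suc k))"
    by (simp add: D_rec algebra_simps)
  then show ?case using Suc by simp
qed

lemma q_pos:
  assumes "0 < \<theta>" "\<theta> < 1" "\<theta> \<notin> \<rat>"
  shows "cf_q \<theta> k \<ge> 1 \<and> cf_q \<theta> (Suc k) \<ge> 1"
proof (induction k)
  case 0 then show ?case using a_props[OF assms, of 0] by simp
next
  case (Suc k) then show ?case by simp
qed


lemma aux1:
  fixes x y :: real assumes "0 \<le> x" "0 \<le> y" "x \<le> x*x"
  shows "x / ((x+y+1)*(x+y+2)) + 1/(x+y+2) \<le> 1/(y+2)"
proof -
  have A: "(x+y+1)*(x+y+2) > 0" using assms by simp
  have "x / ((x+y+1)*(x+y+2)) + 1/(x+y+2) = (2*x+y+1)/((x+y+1)*(x+y+2))"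
  proof -
    have "x+y+1 \<noteq> 0" "x+y+2 \<noteq> 0" using assms by linarith+
    then show ?thesis by (simp add: divide_simps; simp add: algebra_simps)
  qed
  also have "\<dots> \<le> 1/(y+2)"
  proof -
    have "(2*x+y+1)*(y+2) \<le> (x+y+1)*(x+y+2)" using assms by (simp add: algebra_simps)
    then show ?thesis using A assms by (simp add: divide_simps)
  qed
  finally show ?thesis .
qed
lemma aux2:
  fixes r b :: real assumes "0 \<le> b" "r \<le> r*r" "1 \<le> r"
  shows "- (r / ((b + 1) * (b + 2))) + 1 / (b + 1) \<le> 1 / (b + r + 1)"
proof -
  have A: "(b+1)*(b+2) > 0" using assms by simp
  have "- (r / ((b + 1) * (b + 2))) + 1 / (b + 1) = (b+2-r)/((b+1)*(b+2))"
  proof -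
    have "b+1 \<noteq> 0" "b+2 \<noteq> 0" using assms by linarith+
    then show ?thesis by (simp add: divide_simps; simp add: algebra_simps)
  qed
  also have "\<dots> \<le> 1 / (b + r + 1)"
  proof -
    have "(b+2-r)*(b+r+1) \<le> (b+1)*(b+2)" using assms by (simp add: algebra_simps)
    then show ?thesis using A assms by (simp add: divide_simps)
  qed
  finally show ?thesis .
qed

lemma key_ineq:
  fixes b M :: nat and c :: real
  assumes "b \<ge> 1" "1 / (real (b+1) * real (b+2)) \<le> c" "c < 1 / (real b * real (b+1))"
  shows "(real b - 1 - real M) * c + 1 / real (b+1) \<le> 1 / real (M+2)"
proof (cases "M + 1 \<le> b")
  case True
  define s where "s = b - 1 - M"
  have bs: "real b = real s + real M + 1" using True s_def by simp
  have ss: "real s * real s \<ge> real s" by (cases s) auto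
  have "(real b - 1 - real M) * c = real s * c" using bs by simp
  also have "\<dots> \<le> real s * (1 / (real b * real (b+1)))" using assms(3) by (intro mult_left_mono) auto
  finally have 1: "(real b - 1 - real M) * c \<le> real s / ((real s + real M + 1) * (real s + real M + 2))"
    using bs by (simp add: ac_simps)
  have 2: "real s / ((real s + real M + 1) * (real s + real M + 2)) + 1 / (real s + real M + 2) \<le> 1 / (real M + 2)"
    by (rule aux1) (use ss in auto)
  have e1: "real (b+1) = real s + real M + 2" using bs by simp
  have e2: "real (M+2) = real M + 2" by simp
  show ?thesis unfolding e1 e2 using 1 2 by linarith
next
  case False
  define r where "r = M + 1 - b"
  have r1: "r \<ge> 1" using False r_def by simp
  have bM: "real M = real b + real r - 1" using False r_def by simp
  have rr: "real r * real r \<ge> real r" by (cases r) auto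
  have "(real b - 1 - real M) * c = - (real r * c)" using bM by simp
  also have "\<dots> \<le> - (real r * (1 / (real (b+1) * real (b+2))))" using mult_left_mono[OF assms(2), of "real r"] by simp
  finally have 1: "(real b - 1 - real M) * c \<le> - (real r / ((real b + 1) * (real b + 2)))" by (simp add: add.commute)
  have 2: "- (real r / ((real b + 1) * (real b + 2))) + 1 / (real b + 1) \<le> 1 / (real b + real r + 1)"
    by (rule aux2) (use rr r1 in auto)
  have e1: "real (b+1) = real b + 1" by simp
  have e2: "real (M+2) = real b + real r + 1" using bM by simp
  show ?thesis unfolding e1 e2 using 1 2 by linarith
qed


lemma abs_aux: fixes a r w :: real
  shows "1 \<le> \<bar>a - r\<bar> \<Longrightarrow> \<bar>r - w\<bar> \<le> 1/2 \<Longrightarrow> \<bar>w - r\<bar> \<le> \<bar>w - a\<bar>"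
  by (simp add: abs_if split: if_splits)

lemma tnorm_le: "tnorm w \<le> \<bar>w - of_int m\<bar>"
proof -
  have h: "\<bar>of_int (round w) - w\<bar> \<le> 1/2" by (rule of_int_round_abs_le)
  show ?thesis
  proof (cases "m = round w")
    case True then show ?thesis by (simp add: tnorm_def)
  next
    case False
    then have "\<bar>of_int m - of_int (round w) :: real\<bar> \<ge> 1"
      by (metis of_int_1_le_iff of_int_abs of_int_diff zero_less_abs_iff int_one_le_iff_zero_less eq_iff_diff_eq_0)
    then show ?thesis using h unfolding tnorm_def by (rule abs_aux)
  qed
qed

lemma D_even:
  assumes "0 < \<theta>" "\<theta> < 1" "\<theta> \<notin> \<rat>" "k \<ge> 1" "even k"
  shows "0 < cf_D \<theta> k" "cf_D \<theta> k < 1/2" "cf_D \<theta> (Suc k) < 0"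
proof -
  let ?r = "cf_rem \<theta>"
  have rp: "\<And>j. 0 < ?r j \<and> ?r j < 1" using rem_props[OF assms(1-3)] by auto
  have P: "\<And>m. 0 < (\<Prod>j\<le>m. ?r j)" using rp by (simp add: prod_pos)
  have Dk: "cf_D \<theta> k = (\<Prod>j\<le>k. ?r j)" using D_prod[OF assms(1-3), of k] assms(5) by simp
  have Dk1: "cf_D \<theta> (Suc k) = - (\<Prod>j\<le>Suc k. ?r j)" using D_prod[OF assms(1-3), of k] assms(5) by simp
  show "0 < cf_D \<theta> k" using Dk P by simp
  show "cf_D \<theta> (Suc k) < 0" using Dk1 P[of k] rp[of "Suc k"] by simp
  obtain m where m: "k = Suc m" using assms(4) by (cases k) auto
  have l1: "(\<Prod>j<m. ?r j) \<le> 1" using rp by (intro prod_le_1) (simp add: less_imp_le)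
  have l0: "0 \<le> (\<Prod>j<m. ?r j)" using rp by (simp add: prod_nonneg less_imp_le)
  have "(\<Prod>j\<le>k. ?r j) = (\<Prod>j<m. ?r j) * (?r m * ?r (Suc m))"
    unfolding m by (simp add: lessThan_Suc_atMost[symmetric] mult.assoc)
  also have "\<dots> \<le> ?r m * ?r (Suc m)"
    using l0 l1 rp by (simp add: mult_left_le_one_le)
  also have "\<dots> < 1/2"
  proof -
    have a: "real (cf_a \<theta> (Suc m)) = 1 / ?r m - ?r (Suc m)" "cf_a \<theta> (Suc m) \<ge> 1"
      using a_props[OF assms(1-3), of m] by auto
    have "1 / ?r m \<ge> 1 + ?r (Suc m)" using a by simp
    then have "1 \<ge> ?r m * (1 + ?r (Suc m))" using rp[of m] by (simp add: field_simps)
    moreover have "?r m * ?r (Suc m) < ?r m" using rp[of "Suc m"] rp[of m] by simp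
    ultimately show ?thesis by (simp add: algebra_simps)
  qed
  finally show "cf_D \<theta> k < 1/2" using Dk by simp
qed


theorem lemma4p1:
  fixes \<theta> :: real and k b :: nat
  assumes "0 < \<theta>" "\<theta> < 1" "\<theta> \<notin> \<rat>"
    and "k \<ge> 1" "even k" "b \<ge> 1"
    and "1 / (real (b+1) * real (b+2)) \<le> real (cf_q \<theta> k) * tnorm (real (cf_q \<theta> k) * \<theta>)"
    and "real (cf_q \<theta> k) * tnorm (real (cf_q \<theta> k) * \<theta>) < 1 / (real b * real (b+1))"
  shows "(\<Union>i\<in>{1..cf_q \<theta> k}.
           tinterval (real i * \<theta> - 1 / real (cf_q \<theta> (k+1)))
                     (real i * \<theta> + (real b - 1) * tnorm (real (cf_q \<theta> k) * \<theta>)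
                        + 1 / (real (b+1) * real (cf_q \<theta> k))))
         \<subseteq> F_set \<theta> k"
proof
  define q where "q = cf_q \<theta> k"
  define Q where "Q = cf_q \<theta> (k+1)"
  define p where "p = cf_p \<theta> k"
  define \<delta> where "\<delta> = tnorm (real q * \<theta>)"
  have qpos: "q \<ge> 1" using q_pos[OF assms(1-3), of k] q_def by simp
  have Qpos: "Q \<ge> 1" using q_pos[OF assms(1-3), of k] Q_def by simp
  have D: "0 < cf_D \<theta> k" "cf_D \<theta> k < 1/2" "cf_D \<theta> (Suc k) < 0" using D_even[OF assms(1-5)] by auto
  have qth: "real q * \<theta> = of_int p + cf_D \<theta> k" by (simp add: cf_D_def q_def p_def)
  have "round (real q * \<theta>) = p" using D qth by (intro round_unique') simp
  then have dD: "\<delta> = cf_D \<theta> k" using D qth by (simp add: \<delta>_def tnorm_def)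
  have dpos: "\<delta> > 0" using D dD by simp
  have qth2: "real q * \<theta> = of_int p + \<delta>" using qth dD by simp
  have E: "real Q * \<delta> - real q * cf_D \<theta> (Suc k) = 1"
    using E_ident[of \<theta> k] assms(5) dD Q_def q_def by simp
  have "real q * cf_D \<theta> (Suc k) < 0" using qpos D(3) by (simp add: mult_pos_neg)
  then have dQ: "real Q * \<delta> < 1" using E by linarith
  have c1: "1 / (real (b+1) * real (b+2)) \<le> real q * \<delta>" using assms(7) q_def \<delta>_def by simp
  have c2: "real q * \<delta> < 1 / (real b * real (b+1))" using assms(8) q_def \<delta>_def by simp
  fix y assume "y \<in> (\<Union>i\<in>{1..cf_q \<theta> k}.
           tinterval (real i * \<theta> - 1 / real (cf_q \<theta> (k+1)))
                     (real i * \<theta> + (real b - 1) * tnorm (real (cf_q \<theta> k) * \<theta>)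
                        + 1 / (real (b+1) * real (cf_q \<theta> k))))"
  then obtain i where i: "1 \<le> i" "i \<le> q" and
    yi: "y \<in> tinterval (real i * \<theta> - 1 / real Q) (real i * \<theta> + (real b - 1) * \<delta> + 1 / (real (b+1) * real q))"
    unfolding q_def Q_def \<delta>_def by auto
  then obtain t' where t1: "real i * \<theta> - 1 / real Q < t'"
    and t2: "t' < real i * \<theta> + (real b - 1) * \<delta> + 1 / (real (b+1) * real q)"
    and z: "y - t' \<in> \<int>" unfolding tinterval_def by blast
  obtain zz where zz: "y - t' = of_int zz" using z Ints_cases by metis
  define t where "t = t' - real i * \<theta>"
  have tlo: "- (1 / real Q) < t" using t1 t_def by simp
  have thi: "t < (real b - 1) * \<delta> + 1 / (real (b+1) * real q)" using t2 t_def by simp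
  show "y \<in> F_set \<theta> k" unfolding F_set_def
  proof (rule INT_I)
    fix n assume n: "n \<in> {cf_q \<theta> k + 1..cf_q \<theta> (k + 1)}"
    then have nq: "q + 1 \<le> n" "n \<le> Q" unfolding q_def Q_def by auto
    have dn: "\<delta> < 1 / real n"
    proof -
      have "real n * \<delta> \<le> real Q * \<delta>" using nq dpos by (simp add: mult_right_mono)
      then have "real n * \<delta> < 1" using dQ by linarith
      then show ?thesis using nq by (simp add: field_simps)
    qed
    have Qn: "1 / real Q \<le> 1 / real n" using nq by (simp add: frac_le)
    have ex: "\<exists>m::nat. i + m * q \<le> n \<and> \<bar>t - real m * \<delta>\<bar> < 1 / real n"
    proof (cases "t \<le> 0")
      case True
      have "i \<le> n" using i nq by simp
      moreover have "\<bar>t - real 0 * \<delta>\<bar> < 1 / real n" using True tlo Qn by simp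
      ultimately show ?thesis by (intro exI[of _ 0]) simp
    next
      case False
      define M where "M = (n - i) div q"
      have M1: "M * q \<le> n - i" unfolding M_def by (rule div_times_less_eq_dividend)
      have M2: "n - i < (M+1) * q"
      proof -
        have "n - i = M * q + (n - i) mod q" unfolding M_def by simp
        moreover have "(n - i) mod q < q" using qpos by simp
        ultimately show ?thesis by simp
      qed
      have iMn: "i + M*q \<le> n" using M1 i nq by simp
      have "n < (M+2) * q" using M2 i by simp
      then have nlt: "real n < (real M + 2) * real q" by (metis of_nat_less_iff of_nat_mult of_nat_add of_nat_numeral)
      define f where "f = nat \<lfloor>t/\<delta>\<rfloor>"
      have tpos: "t/\<delta> \<ge> 0" using False dpos by simp
      have rf: "real f = of_int \<lfloor>t/\<delta>\<rfloor>" using tpos f_def by simp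
      have f1: "real f * \<delta> \<le> t"
      proof -
        have "real f \<le> t/\<delta>" using rf by simp
        then show ?thesis using dpos by (simp add: field_simps)
      qed
      have f2: "t < (real f + 1) * \<delta>"
      proof -
        have "t/\<delta> < real f + 1" using rf by linarith
        then show ?thesis using dpos by (simp add: field_simps)
      qed
      show ?thesis
      proof (cases "f \<le> M")
        case True
        have "f * q \<le> M * q" using True by simp
        then have "i + f * q \<le> n" using iMn by linarith
        moreover have "\<bar>t - real f * \<delta>\<bar> < 1 / real n" using f1 f2 dn by (simp add: algebra_simps)
        ultimately show ?thesis by blast
      next
        case False
        then have "real M + 1 \<le> real f" by simp
        then have "(real M + 1) * \<delta> \<le> real f * \<delta>" using dpos by (simp add: mult_right_mono)
        then have tM: "real M * \<delta> < t" using f1 dpos by (simp add: algebra_simps)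
        have key: "(real b - 1 - real M) * (real q * \<delta>) + 1 / real (b+1) \<le> 1 / real (M+2)"
          using key_ineq[OF assms(6) c1 c2] .
        have qp: "real q > 0" using qpos by simp
        have "((real b - 1 - real M) * (real q * \<delta>) + 1 / real (b+1)) / real q \<le> (1 / real (M+2)) / real q"
          using divide_right_mono[OF key, of "real q"] qp by linarith
        then have k2: "(real b - 1 - real M) * \<delta> + 1 / (real (b+1) * real q) \<le> 1 / ((real M + 2) * real q)"
        proof -
          have "((real b - 1 - real M) * (real q * \<delta>) + 1 / real (b+1)) / real q
              = (real b - 1 - real M) * \<delta> + 1 / (real (b+1) * real q)"
            using qp by (simp add: add_divide_distrib divide_divide_eq_left mult.commute)
          moreover have "(1 / real (M+2)) / real q = 1 / ((real M + 2) * real q)"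
            by (simp add: divide_divide_eq_left)
          ultimately show ?thesis using \<open>((real b - 1 - real M) * (real q * \<delta>) + 1 / real (b+1)) / real q \<le> (1 / real (M+2)) / real q\<close> by (simp add: add.commute)
        qed
        have k3: "1 / ((real M + 2) * real q) < 1 / real n"
          using nlt nq by (simp add: frac_less2)
        have "\<bar>t - real M * \<delta>\<bar> < 1 / real n"
          using tM thi k2 k3 by (simp add: algebra_simps)
        then show ?thesis using iMn by blast
      qed
    qed
    then obtain m :: nat where m: "i + m * q \<le> n" "\<bar>t - real m * \<delta>\<bar> < 1 / real n" by blast
    define j where "j = i + m * q"
    have "y - real j * \<theta> - of_int (zz - int m * p) = t - real m * \<delta>"
    proof -
      have "y - real j * \<theta> - of_int (zz - int m * p)
          = (y - t') + t' - real i * \<theta> - real m * (real q * \<theta>) - of_int zz + real m * of_int p"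
        by (simp add: j_def algebra_simps)
      also have "\<dots> = t - real m * \<delta>" using zz qth2 t_def by (simp add: algebra_simps)
      finally show ?thesis .
    qed
    then have "tnorm (y - real j * \<theta>) < 1 / real n"
      using tnorm_le[of "y - real j * \<theta>" "zz - int m * p"] m(2) by simp
    moreover have "j \<in> {1..n}" using m(1) i j_def by simp
    ultimately show "y \<in> G_set \<theta> n" unfolding G_set_def tball_def by blast
  qed
qed

end
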